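(* Let $M$ be a commutative free monoid on countably many generators $a_1,a_2,\ldots$, with a monoid homomorphism $\deg:M\to(\mathbb Z_{\ge0},+)$ such that $\deg^{-1}(0)=\{1\}$ and $\deg^{-1}(d)$ is finite for all $d>0$. For every type $\tau$, in the monoid ring $\mathbb Z[M]$ (resp. $\mathbb Z[M]\otimes\mathbb Q$) $$S_\tau=\sum_{\lambda}a(\lambda,\tau)X_\lambda\qquad\text{and}\qquad X_\tau=\sum_\lambda a^{-1}(\lambda,\tau)S_\lambda,$$ the sums over types $\lambda$ of the same degree as $\tau$. In particular $\#\{b\in M: b\text{ has type }\lambda\}=\sum_\tau a^{-1}(\tau,\lambda)\prod_{(k,m)\in\tau}\#\{b\in M:\deg b=k\}$.
   Context: Each $b\in M$ can be written uniquely up to order as $b=a_{i_1}^{k_1}\cdots a_{i_n}^{k_n}$ with distinct generators and $k_j\ge1$; its type is the multiset $\{(\deg a_{i_1},k_1),\dots,(\deg a_{i_n},k_n)\}$. In general a type of degree $d$ is a finite multiset of pairs $(b,m)$ of positive integers with $\sum bm=d$. $\psi_m:\mathbb Z[M]\to\mathbb Z[M]$ is the ring endomorphism with $\psi_m(a_k)=a_k^m$. $X_\tau\in\mathbb Z[M]$ is the sum of all elements of $M$ of type $\tau$, and $S_\tau=\prod_{(k,m)\in\tau}\psi_m\big(\sum_{b\in\deg^{-1}(k)}b\big)$. For types $\lambda=\{(b_i,m_i)\}_{i\le r}$ and $\tau=\{(c_j,n_j)\}_{j\le s}$ (fixed orderings), an arrangement of $\lambda$ into $\tau$ is an $r\times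 s$ non-negative integer matrix $A$ with $A\vec n=\vec m$ and $A^T\vec b=\vec c$; $a(\lambda,\tau)$ is the number of arrangements. The matrix $(a(\lambda,\tau))$ indexed by types of degree $d$ is invertible over $\mathbb Q$, with inverse entries $a^{-1}(\lambda,\tau)$. *)

theory Defs
  imports Complex_Main "HOL-Library.Multiset" "HOL-Library.Poly_Mapping"
begin

(* The free commutative monoid M on generators a_1, a_2, ... is modelled as
  nat multiset (generator indices with multiplicities, monoid operation +, unit the empty multiset).
  The monoid ring Z[M] (resp. Q[M]) is  nat multiset =>0 int (resp. rat),
  whose multiplication is convolution. *)

type_synonym mon = "nat multiset"
type_synonym mtype = "(nat \<times> nat) multiset"

definition mono :: "mon \<Rightarrow> (mon \<Rightarrow>\<^sub>0 'r::comm_ring_1)" where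
  "mono b = Poly_Mapping.single b 1"

definition psi :: "nat \<Rightarrow> (mon \<Rightarrow>\<^sub>0 'r::comm_ring_1) \<Rightarrow> (mon \<Rightarrow>\<^sub>0 'r)" where
  "psi m f = (\<Sum>b\<in>Poly_Mapping.keys f. Poly_Mapping.single (repeat_mset m b) (Poly_Mapping.lookup f b))"

definition type_of :: "(mon \<Rightarrow> nat) \<Rightarrow> mon \<Rightarrow> mtype" where
  "type_of deg b = image_mset (\<lambda>i. (deg {#i#}, count b i)) (mset_set (set_mset b))"

definition tdeg :: "mtype \<Rightarrow> nat" where
  "tdeg \<tau> = (\<Sum>(b, m)\<in>#\<tau>. b * m)"

definition is_type :: "mtype \<Rightarrow> bool" where
  "is_type \<tau> \<longleftrightarrow> (\<forall>(b, m)\<in>#\<tau>. 0 < b \<and> 0 < m)"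

definition types_of_deg :: "nat \<Rightarrow> mtype set" where
  "types_of_deg d = {\<tau>. is_type \<tau> \<and> tdeg \<tau> = d}"

definition X :: "(mon \<Rightarrow> nat) \<Rightarrow> mtype \<Rightarrow> (mon \<Rightarrow>\<^sub>0 'r::comm_ring_1)" where
  "X deg \<tau> = (\<Sum>b\<in>{b. type_of deg b = \<tau>}. mono b)"

definition S :: "(mon \<Rightarrow> nat) \<Rightarrow> mtype \<Rightarrow> (mon \<Rightarrow>\<^sub>0 'r::comm_ring_1)" where
  "S deg \<tau> = (\<Prod>(k, m)\<in>#\<tau>. psi m (\<Sum>b\<in>{b. deg b = k}. mono b))"

definition arrangements_list :: "(nat \<times> nat) list \<Rightarrow> (nat \<times> nat) list \<Rightarrow> (nat \<Rightarrow> nat \<Rightarrow> nat) set" where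
  "arrangements_list lam tau =
     {A. (\<forall>i j. (length lam \<le> i \<or> length tau \<le> j) \<longrightarrow> A i j = 0)
       \<and> (\<forall>i<length lam. (\<Sum>j<length tau. A i j * snd (tau ! j)) = snd (lam ! i))
       \<and> (\<forall>j<length tau. (\<Sum>i<length lam. A i j * fst (lam ! i)) = fst (tau ! j))}"

definition arr :: "mtype \<Rightarrow> mtype \<Rightarrow> nat" where
  "arr lam tau = card (arrangements_list (SOME xs. mset xs = lam) (SOME ys. mset ys = tau))"

definition is_arr_inverse :: "nat \<Rightarrow> (mtype \<Rightarrow> mtype \<Rightarrow> rat) \<Rightarrow> bool" where
  "is_arr_inverse d g \<longleftrightarrow>
     (\<forall>l\<in>types_of_deg d. \<forall>t\<in>types_of_deg d.
        (\<Sum>u\<in>types_of_deg d. of_nat (arr l u) * g u t) = (if l = t then 1 else 0)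
      \<and> (\<Sum>u\<in>types_of_deg d. g l u * of_nat (arr u t)) = (if l = t then 1 else 0))
   \<and> (\<forall>l t. l \<notin> types_of_deg d \<or> t \<notin> types_of_deg d \<longrightarrow> g l t = 0)"

definition arr_inv :: "mtype \<Rightarrow> mtype \<Rightarrow> rat" where
  "arr_inv l t = (THE g. is_arr_inverse (tdeg t) g) l t"

end

theory Submission
  imports Defs "Jordan_Normal_Form.Determinant" "HOL-Combinatorics.List_Permutation"
begin


locale degm = fixes deg :: "nat multiset \<Rightarrow> nat"
  assumes hom0: "deg {#} = 0" and hom: "\<And>x y. deg (x + y) = deg x + deg y"
    and deg0: "{b. deg b = 0} = { {#} }" and fin: "\<And>d. 0 < d \<Longrightarrow> finite {b. deg b = d}"
begin

lemma deg_repeat: "deg (repeat_mset n b) = n * deg b"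
  by (induct n) (auto simp: hom hom0)

lemma deg_repl: "deg (replicate_mset n g) = n * deg {#g#}"
proof (induct n)
  case (Suc n)
  have "deg (replicate_mset (Suc n) g) = deg {#g#} + deg (replicate_mset n g)"
    using hom[of "{#g#}" "replicate_mset n g"] by simp
  with Suc show ?case by simp
qed (simp add: hom0)

lemma deg_sum: "deg (sum f A) = (\<Sum>a\<in>A. deg (f a))"
  by (induct A rule: infinite_finite_induct) (auto simp: hom hom0)

lemma gen_pos: "0 < deg {#i#}"
  using deg0 by (metis empty_not_add_mset gr0I mem_Collect_eq singletonD)

lemma fin_all: "finite {b. deg b = d}"
  using fin[of d] deg0 by (cases "d = 0") auto

lemma mset_decomp: "finite G \<Longrightarrow> set_mset b \<subseteq> G \<Longrightarrow> b = (\<Sum>g\<in>G. repeat_mset (count b g) {#g#})"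
  by (rule multiset_eqI) (auto simp: count_sum count_eq_zero_iff)

lemma deg_count: "finite G \<Longrightarrow> set_mset b \<subseteq> G \<Longrightarrow> deg b = (\<Sum>g\<in>G. count b g * deg {#g#})"
  apply (subst mset_decomp, assumption, assumption)
  by (simp add: deg_sum deg_repl)

lemma tdeg_type: "tdeg (type_of deg b) = deg b"
proof -
  have "tdeg (type_of deg b) = (\<Sum>i\<in>set_mset b. deg {#i#} * count b i)"
    unfolding tdeg_def type_of_def by (simp add: sum_unfold_sum_mset image_mset.compositionality o_def)
  also have "\<dots> = deg b" using deg_count[of "set_mset b" b] by (simp add: mult.commute)
  finally show ?thesis .
qed

lemma is_type_type: "is_type (type_of deg b)"
  unfolding is_type_def type_of_def using gen_pos by auto

end

lemma tdeg_ge: "is_type \<tau> \<Longrightarrow> size \<tau> \<le> tdeg \<tau>"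
proof -
  assume t: "is_type \<tau>"
  have "size \<tau> = (\<Sum>p\<in>#\<tau>. (1::nat))" by (induct \<tau>) auto
  also have "\<dots> \<le> (\<Sum>(b, m)\<in>#\<tau>. b * m)"
  proof (rule sum_mset_mono)
    fix p assume "p \<in># \<tau>"
    with t obtain b m where "p = (b, m)" "0 < b" "0 < m" by (cases p) (auto simp: is_type_def)
    thus "1 \<le> (case p of (b, m) \<Rightarrow> b * m)" by (simp add: Suc_le_eq)
  qed
  finally show ?thesis by (simp add: tdeg_def)
qed

lemma tdeg_elem: "(b, m) \<in># \<tau> \<Longrightarrow> is_type \<tau> \<Longrightarrow> b \<le> tdeg \<tau> \<and> m \<le> tdeg \<tau>"
proof -
  assume a: "(b, m) \<in># \<tau>" and t: "is_type \<tau>"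
  then obtain r where r: "\<tau> = add_mset (b,m) r" by (metis multi_member_split)
  have "b * m \<le> tdeg \<tau>" unfolding tdeg_def r by simp
  moreover have "0 < b" "0 < m" using a t by (auto simp: is_type_def)
  ultimately show ?thesis
  proof -
    have "b \<le> b * m" "m \<le> b * m" using \<open>0 < b\<close> \<open>0 < m\<close> by simp_all
    thus ?thesis using \<open>b * m \<le> tdeg \<tau>\<close> by linarith
  qed
qed

lemma finite_types: "finite (types_of_deg d)"
proof -
  have "types_of_deg d \<subseteq> (\<Union>n\<le>d. multisets_of_size ({0..d} \<times> {0..d}) n)"
  proof
    fix t assume "t \<in> types_of_deg d"
    hence t: "is_type t" "tdeg t = d" by (auto simp: types_of_deg_def)
    have "set_mset t \<subseteq> {0..d} \<times> {0..d}" using tdeg_elem[OF _ t(1)] t(2) by fastforce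
    thus "t \<in> (\<Union>n\<le>d. multisets_of_size ({0..d} \<times> {0..d}) n)"
      using tdeg_ge[OF t(1)] t(2) by (auto simp: multisets_of_size_def)
  qed
  thus ?thesis by (rule finite_subset) auto
qed




definition E :: "(mon \<Rightarrow> nat) \<Rightarrow> nat \<Rightarrow> (mon \<Rightarrow>\<^sub>0 'r::comm_ring_1)" where
  "E deg k = (\<Sum>b\<in>{b. deg b = k}. mono b)"

definition Tset :: "(mon \<Rightarrow> nat) \<Rightarrow> (nat \<times> nat) list \<Rightarrow> mon list set" where
  "Tset deg ys = {bs. length bs = length ys \<and> (\<forall>j<length ys. deg (bs ! j) = fst (ys ! j))}"

definition sig :: "(nat \<times> nat) list \<Rightarrow> mon list \<Rightarrow> mon" where
  "sig ys bs = (\<Sum>j<length ys. repeat_mset (snd (ys ! j)) (bs ! j))"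

lemma psi_sum: "finite F \<Longrightarrow> Poly_Mapping.keys f \<subseteq> F \<Longrightarrow>
   psi m f = (\<Sum>b\<in>F. Poly_Mapping.single (repeat_mset m b) (Poly_Mapping.lookup f b))"
  unfolding psi_def by (rule sum.mono_neutral_left) (auto simp: in_keys_iff)

lemma mono_mult: "mono (a + b) = (mono a * mono b :: _ \<Rightarrow>\<^sub>0 'r::comm_ring_1)"
  by (simp add: mono_def mult_single)

lemma Tset_Nil: "Tset deg [] = {[]}" by (auto simp: Tset_def)

lemma Tset_Cons: "Tset deg (p # ys) = (\<lambda>(b, bs). b # bs) ` ({b. deg b = fst p} \<times> Tset deg ys)"
proof (rule Set.set_eqI)
  fix cs show "cs \<in> Tset deg (p # ys) \<longleftrightarrow> cs \<in> (\<lambda>(b, bs). b # bs) ` ({b. deg b = fst p} \<times> Tset deg ys)"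
  proof (cases cs)
    case Nil thus ?thesis by (auto simp: Tset_def)
  next
    case (Cons c cs')
    have "cs \<in> Tset deg (p # ys) \<longleftrightarrow> deg c = fst p \<and> cs' \<in> Tset deg ys"
      unfolding Cons Tset_def by (auto simp: less_Suc_eq_0_disj)
    thus ?thesis unfolding Cons by auto
  qed
qed

lemma sig_Cons: "sig (p # ys) (b # bs) = repeat_mset (snd p) b + sig ys bs"
  unfolding sig_def length_Cons sum.lessThan_Suc_shift by simp

context degm begin

lemma E_lookup: "Poly_Mapping.lookup (E deg k :: _ \<Rightarrow>\<^sub>0 'r::comm_ring_1) b = (if deg b = k then 1 else 0)"
  unfolding E_def mono_def using fin_all[of k]
  by (simp add: lookup_sum lookup_single when_def sum.delta)

lemma psi_E: "psi m (E deg k :: _ \<Rightarrow>\<^sub>0 'r::comm_ring_1) = (\<Sum>b\<in>{b. deg b = k}. mono (repeat_mset m b))"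
proof -
  have "psi m (E deg k :: _ \<Rightarrow>\<^sub>0 'r) = (\<Sum>b\<in>{b. deg b = k}. Poly_Mapping.single (repeat_mset m b) (Poly_Mapping.lookup (E deg k :: _ \<Rightarrow>\<^sub>0 'r) b))"
    by (rule psi_sum) (auto simp: fin_all in_keys_iff E_lookup split: if_splits)
  thus ?thesis by (simp add: E_lookup mono_def)
qed

lemma finite_Tset: "finite (Tset deg ys)"
  by (induct ys) (auto simp: Tset_Nil Tset_Cons fin_all)

lemma expand: "prod_list (map (\<lambda>(k, m). psi m (E deg k :: _ \<Rightarrow>\<^sub>0 'r::comm_ring_1)) ys)
   = (\<Sum>bs\<in>Tset deg ys. mono (sig ys bs))"
proof (induct ys)
  case Nil thus ?case by (simp add: Tset_Nil sig_def mono_def)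
next
  case (Cons p ys)
  obtain k m where p: "p = (k, m)" by (cases p)
  have inj: "inj_on (\<lambda>(b, bs). b # bs) ({b. deg b = fst p} \<times> Tset deg ys)" by (auto simp: inj_on_def)
  have "(\<Sum>bs\<in>Tset deg (p # ys). mono (sig (p # ys) bs) :: _ \<Rightarrow>\<^sub>0 'r)
     = (\<Sum>(b, bs)\<in>{b. deg b = fst p} \<times> Tset deg ys. mono (sig (p # ys) (b # bs)))"
    unfolding Tset_Cons by (subst sum.reindex[OF inj]) (simp add: case_prod_unfold)
  also have "\<dots> = (\<Sum>b\<in>{b. deg b = k}. \<Sum>bs\<in>Tset deg ys. mono (repeat_mset m b) * mono (sig ys bs))"
    by (subst sum.cartesian_product[symmetric]) (simp add: p sig_Cons mono_mult)
  also have "\<dots> = psi m (E deg k) * (\<Sum>bs\<in>Tset deg ys. mono (sig ys bs))"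
    by (simp add: psi_E sum_product)
  finally show ?case using Cons by (simp add: p)
qed

lemma deg_sig: "bs \<in> Tset deg ys \<Longrightarrow> deg (sig ys bs) = tdeg (mset ys)"
proof (induct ys arbitrary: bs)
  case Nil thus ?case by (simp add: Tset_Nil sig_def tdeg_def hom0)
next
  case (Cons p ys)
  then obtain b bs' where "bs = b # bs'" "deg b = fst p" "bs' \<in> Tset deg ys" by (auto simp: Tset_Cons)
  thus ?case using Cons by (cases p) (simp add: sig_Cons hom deg_repeat tdeg_def)
qed

end



lemma exists_list: "finite SS \<Longrightarrow> mset xs = image_mset f (mset_set SS) \<Longrightarrow>
   \<exists>gl. distinct gl \<and> set gl = SS \<and> map f gl = xs"
proof (induct xs arbitrary: SS)
  case Nil thus ?case by (auto simp: mset_set_empty_iff)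
next
  case (Cons a xs SS)
  have "a \<in># image_mset f (mset_set SS)" using Cons(3)[symmetric] by simp
  then obtain s where s: "s \<in> SS" "f s = a" using Cons(2) by auto
  have "mset_set SS = add_mset s (mset_set (SS - {s}))" using s Cons(2) by (simp add: mset_set.remove)
  hence "mset xs = image_mset f (mset_set (SS - {s}))" using Cons(3) s by simp
  then obtain gl where "distinct gl" "set gl = SS - {s}" "map f gl = xs" using Cons(1)[of "SS - {s}"] Cons(2) by auto
  thus ?case using s by (intro exI[of _ "s # gl"]) auto
qed

lemma cnt_sum: "count (\<Sum>i<r. replicate_mset (a i) (gl ! i)) g = (\<Sum>i<r. if gl ! i = g then a i else 0)"
  by (auto simp: count_sum intro!: sum.cong)

lemma delta_sum: "distinct gl \<Longrightarrow> k < length gl \<Longrightarrow>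
   (\<Sum>i<length gl. if gl ! i = gl ! k then a i else 0) = (a k :: nat)"
proof -
  assume d: "distinct gl" and k: "k < length gl"
  have "(\<Sum>i<length gl. if gl ! i = gl ! k then a i else 0) = (\<Sum>i<length gl. if i = k then a i else 0)"
    by (rule sum.cong) (use d k in \<open>auto simp: nth_eq_iff_index_eq\<close>)
  thus ?thesis using k by simp
qed

lemma sum_nth_set: "distinct gl \<Longrightarrow> (\<Sum>i<length gl. h (gl ! i)) = (\<Sum>g\<in>set gl. (h g :: nat))"
proof -
  assume d: "distinct gl"
  have "set gl = (!) gl ` {..<length gl}" by (auto simp: in_set_conv_nth)
  moreover have "inj_on ((!) gl) {..<length gl}" using d by (simp add: inj_on_def nth_eq_iff_index_eq)
  ultimately show ?thesis by (simp add: sum.reindex)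
qed

context degm begin

lemma support_sig: assumes "bs \<in> Tset deg ys" "sig ys bs = x" "j < length ys" "\<forall>p\<in>set ys. 0 < snd p"
  shows "set_mset (bs ! j) \<subseteq> set_mset x"
proof
  fix g assume g: "g \<in># bs ! j"
  have "snd (ys ! j) * count (bs ! j) g \<le> (\<Sum>j'<length ys. snd (ys ! j') * count (bs ! j') g)"
    by (rule member_le_sum) (use assms in auto)
  also have "\<dots> = count (sig ys bs) g" by (simp add: sig_def count_sum)
  also have "\<dots> = count x g" using assms(2) by simp
  finally show "g \<in># x" using g assms(3,4) nth_mem[OF assms(3)]
    by (metis count_greater_zero_iff leD less_le_trans nat_0_less_mult_iff not_gr_zero)
qed

lemma card_fiber:
  assumes pos: "\<forall>p\<in>set ys. 0 < snd p" and xs: "mset xs = type_of deg x"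
  shows "card {bs \<in> Tset deg ys. sig ys bs = x} = card (arrangements_list xs ys)"
proof -
  define f where "f = (\<lambda>i. (deg {#i#}, count x i))"
  obtain gl where gl: "distinct gl" "set gl = set_mset x" "map f gl = xs"
    using exists_list[of "set_mset x" xs f] xs unfolding type_of_def f_def by auto
  define r where "r = length gl"
  define s where "s = length ys"
  have lxs: "length xs = r" using gl(3) r_def by auto
  have xsi: "xs ! i = (deg {#gl ! i#}, count x (gl ! i))" if "i < r" for i
    using gl(3) that unfolding r_def f_def by auto
  define \<phi> where "\<phi> A = map (\<lambda>j. \<Sum>i<r. repeat_mset (A i j) {#gl ! i#}) [0..<s]" for A :: "nat \<Rightarrow> nat \<Rightarrow> nat"
  define \<psi> where "\<psi> bs = (\<lambda>i j. if i < r \<and> j < s then count (bs ! j) (gl ! i) else 0)" for bs :: "mon list"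
  let ?Arr = "arrangements_list xs ys"
  let ?F = "{bs \<in> Tset deg ys. sig ys bs = x}"
  have cnt: "count (\<phi> A ! j) (gl ! k) = A k j" if "j < s" "k < r" for A j k
    using that delta_sum[OF gl(1), of k "\<lambda>i. A i j"] unfolding \<phi>_def r_def by (simp add: cnt_sum)
  have cnt0: "count (\<phi> A ! j) g = 0" if "j < s" "g \<notin> set gl" for A j g
    using that unfolding \<phi>_def r_def by (auto simp: cnt_sum intro!: sum.neutral)
  have "bij_betw \<phi> ?Arr ?F"
  proof (rule bij_betw_byWitness[where f' = \<psi>])
    show "\<forall>A\<in>?Arr. \<psi> (\<phi> A) = A"
    proof
      fix A assume A: "A \<in> ?Arr"
      show "\<psi> (\<phi> A) = A"
      proof (intro ext)
        fix i j show "\<psi> (\<phi> A) i j = A i j"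
          using A cnt[of j i A] lxs unfolding \<psi>_def arrangements_list_def s_def by auto
      qed
    qed
    show "\<forall>bs\<in>?F. \<phi> (\<psi> bs) = bs"
    proof
      fix bs assume bs: "bs \<in> ?F"
      hence lbs: "length bs = s" by (auto simp: Tset_def s_def)
      show "\<phi> (\<psi> bs) = bs"
      proof (rule nth_equalityI)
        show "length (\<phi> (\<psi> bs)) = length bs" using lbs by (simp add: \<phi>_def)
        fix j assume "j < length (\<phi> (\<psi> bs))"
        hence j: "j < s" by (simp add: \<phi>_def)
        have sup: "set_mset (bs ! j) \<subseteq> set gl" using support_sig[of bs ys x j] bs j pos gl(2) s_def by auto
        show "\<phi> (\<psi> bs) ! j = bs ! j"
        proof (rule multiset_eqI)
          fix g
          show "count (\<phi> (\<psi> bs) ! j) g = count (bs ! j) g"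
          proof (cases "g \<in> set gl")
            case True
            then obtain k where k: "k < r" "g = gl ! k" by (auto simp: in_set_conv_nth r_def)
            thus ?thesis using cnt[of j k "\<psi> bs"] j by (simp add: \<psi>_def)
          next
            case False
            have "count (bs ! j) g = 0" using sup False by (auto simp: count_eq_zero_iff)
            thus ?thesis using cnt0[of j g "\<psi> bs"] j False by simp
          qed
        qed
      qed
    qed
    show "\<phi> ` ?Arr \<subseteq> ?F"
    proof
      fix bs assume "bs \<in> \<phi> ` ?Arr"
      then obtain A where A: "A \<in> ?Arr" and bsA: "bs = \<phi> A" by auto
      have rows: "\<forall>i<r. (\<Sum>j<s. A i j * snd (ys ! j)) = count x (gl ! i)"
        using A xsi lxs unfolding arrangements_list_def s_def by auto
      have cols: "\<forall>j<s. (\<Sum>i<r. A i j * deg {#gl ! i#}) = fst (ys ! j)"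
        using A xsi lxs unfolding arrangements_list_def s_def by auto
      have "bs \<in> Tset deg ys"
        unfolding Tset_def bsA
      proof (intro CollectI conjI allI impI)
        show "length (\<phi> A) = length ys" by (simp add: \<phi>_def s_def)
        fix j assume j: "j < length ys"
        have "deg (\<phi> A ! j) = (\<Sum>i<r. A i j * deg {#gl ! i#})"
          using j by (simp add: \<phi>_def s_def deg_sum deg_repl)
        thus "deg (\<phi> A ! j) = fst (ys ! j)" using cols j s_def by simp
      qed
      moreover have "sig ys bs = x"
      proof (rule multiset_eqI)
        fix g
        have cs: "count (sig ys bs) g = (\<Sum>j<s. snd (ys ! j) * count (\<phi> A ! j) g)"
          unfolding sig_def bsA s_def by (simp add: count_sum)
        show "count (sig ys bs) g = count x g"
        proof (cases "g \<in> set gl")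
          case True
          then obtain k where k: "k < r" "g = gl ! k" by (auto simp: in_set_conv_nth r_def)
          have "count (sig ys bs) g = (\<Sum>j<s. A k j * snd (ys ! j))"
            unfolding cs using k by (intro sum.cong) (auto simp: cnt mult.commute)
          thus ?thesis using rows k by simp
        next
          case False
          hence "count x g = 0" using gl(2) by (simp add: count_eq_zero_iff)
          moreover have "(\<Sum>j<s. snd (ys ! j) * count (\<phi> A ! j) g) = 0"
            using cnt0[OF _ False] by simp
          ultimately show ?thesis unfolding cs by simp
        qed
      qed
      ultimately show "bs \<in> ?F" by simp
    qed
    show "\<psi> ` ?F \<subseteq> ?Arr"
    proof
      fix A assume "A \<in> \<psi> ` ?F"
      then obtain bs where bs: "bs \<in> ?F" and A: "A = \<psi> bs" by auto
      have lbs: "length bs = s" and dg: "\<And>j. j < s \<Longrightarrow> deg (bs ! j) = fst (ys ! j)"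
        using bs by (auto simp: Tset_def s_def)
      show "A \<in> ?Arr" unfolding arrangements_list_def
      proof (intro CollectI conjI allI impI)
        fix i j assume "length xs \<le> i \<or> length ys \<le> j"
        thus "A i j = 0" using lxs by (auto simp: A \<psi>_def s_def)
      next
        fix i assume i: "i < length xs"
        have "(\<Sum>j<length ys. A i j * snd (ys ! j)) = (\<Sum>j<s. snd (ys ! j) * count (bs ! j) (gl ! i))"
          using i lxs by (intro sum.cong) (auto simp: A \<psi>_def s_def)
        also have "\<dots> = count (sig ys bs) (gl ! i)" unfolding sig_def s_def by (simp add: count_sum)
        also have "\<dots> = snd (xs ! i)" using bs xsi i lxs by simp
        finally show "(\<Sum>j<length ys. A i j * snd (ys ! j)) = snd (xs ! i)" .
      next
        fix j assume j: "j < length ys"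
        have sup: "set_mset (bs ! j) \<subseteq> set gl" using support_sig[of bs ys x j] bs j pos gl(2) by auto
        have "(\<Sum>i<length xs. A j' i * 0) = 0" for j' by simp
        have "(\<Sum>i<length xs. A i j * fst (xs ! i)) = (\<Sum>i<length gl. count (bs ! j) (gl ! i) * deg {#gl ! i#})"
          using j lxs by (intro sum.cong) (auto simp: A \<psi>_def s_def r_def xsi)
        also have "\<dots> = (\<Sum>g\<in>set gl. count (bs ! j) g * deg {#g#})"
          by (rule sum_nth_set[OF gl(1), of "\<lambda>g. count (bs ! j) g * deg {#g#}"])
        also have "\<dots> = deg (bs ! j)" using deg_count[OF _ sup] by simp
        also have "\<dots> = fst (ys ! j)" using dg j s_def by simp
        finally show "(\<Sum>i<length xs. A i j * fst (xs ! i)) = fst (ys ! j)" .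
      qed
    qed
  qed
  thus ?thesis by (simp add: bij_betw_same_card)
qed

end



definition pos_list :: "(nat \<times> nat) list \<Rightarrow> bool" where
  "pos_list xs \<longleftrightarrow> (\<forall>p\<in>set xs. 0 < fst p \<and> 0 < snd p)"

lemma sum_list_nth: "sum_list (map f xs) = (\<Sum>i<length xs. f (xs ! i))"
  by (induct xs) (simp_all del: sum.lessThan_Suc add: sum.lessThan_Suc_shift)

lemma mset_by_bij:
  assumes "bij_betw \<iota> {..<length ys} {..<length xs}" "\<forall>j<length ys. ys ! j = xs ! \<iota> j"
  shows "mset ys = mset xs"
proof -
  have m: "mset zs = image_mset ((!) zs) (mset_set {..<length zs})" for zs :: "'a list"
  proof -
    have "zs = map ((!) zs) [0..<length zs]" by (simp add: map_nth)
    hence "mset zs = image_mset ((!) zs) (mset [0..<length zs])" by (metis mset_map)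
    thus ?thesis by (simp add: atLeast0LessThan)
  qed
  have inj: "inj_on \<iota> {..<length ys}" and im: "\<iota> ` {..<length ys} = {..<length xs}"
    using assms(1) by (auto simp: bij_betw_def)
  have "mset ys = image_mset ((!) xs \<circ> \<iota>) (mset_set {..<length ys})"
    unfolding m[of ys] using assms(2) by (intro image_mset_cong) auto
  also have "\<dots> = image_mset ((!) xs) (mset_set (\<iota> ` {..<length ys}))"
    by (simp add: image_mset.compositionality[symmetric] image_mset_mset_set[OF inj])
  also have "\<dots> = mset xs" using im m[of xs] by simp
  finally show ?thesis .
qed

lemma arr_main:
  assumes A: "A \<in> arrangements_list xs ys" and px: "pos_list xs" and py: "pos_list ys"
  shows "sum_list (map snd ys) \<le> sum_list (map snd xs)"
    and "sum_list (map snd ys) = sum_list (map snd xs) \<Longrightarrow> length xs \<le> length ys"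
    and "sum_list (map snd ys) = sum_list (map snd xs) \<Longrightarrow> length xs = length ys \<Longrightarrow> mset xs = mset ys"
proof -
  let ?r = "length xs" and ?s = "length ys"
  have z: "\<And>i j. ?r \<le> i \<or> ?s \<le> j \<Longrightarrow> A i j = 0"
    and row: "\<And>i. i < ?r \<Longrightarrow> (\<Sum>j<?s. A i j * snd (ys ! j)) = snd (xs ! i)"
    and col: "\<And>j. j < ?s \<Longrightarrow> (\<Sum>i<?r. A i j * fst (xs ! i)) = fst (ys ! j)"
    using A unfolding arrangements_list_def by auto
  have xpos: "0 < fst (xs ! i)" "0 < snd (xs ! i)" if "i < ?r" for i
    using px that nth_mem[OF that] unfolding pos_list_def by auto
  have ypos: "0 < fst (ys ! j)" "0 < snd (ys ! j)" if "j < ?s" for j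
    using py that nth_mem[OF that] unfolding pos_list_def by auto
  define c where "c j = (\<Sum>i<?r. A i j)" for j
  have c1: "1 \<le> c j" if j: "j < ?s" for j
  proof (rule ccontr)
    assume "\<not> 1 \<le> c j"
    hence "c j = 0" by simp
    hence "\<forall>i<?r. A i j = 0" by (simp add: c_def)
    hence "(\<Sum>i<?r. A i j * fst (xs ! i)) = 0" by simp
    with col[OF j] ypos[OF j] show False by simp
  qed
  have eqs: "sum_list (map snd xs) = (\<Sum>j<?s. snd (ys ! j) * c j)"
  proof -
    have "sum_list (map snd xs) = (\<Sum>i<?r. \<Sum>j<?s. A i j * snd (ys ! j))"
      unfolding sum_list_nth using row by simp
    also have "\<dots> = (\<Sum>j<?s. \<Sum>i<?r. A i j * snd (ys ! j))" by (rule sum.swap)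
    also have "\<dots> = (\<Sum>j<?s. snd (ys ! j) * c j)" by (simp add: c_def sum_distrib_left sum_distrib_right mult.commute)
    finally show ?thesis .
  qed
  have le: "snd (ys ! j) \<le> snd (ys ! j) * c j" if "j \<in> {..<?s}" for j using c1[of j] that by simp
  show "sum_list (map snd ys) \<le> sum_list (map snd xs)"
  proof -
    have "(\<Sum>j<?s. snd (ys ! j)) \<le> (\<Sum>j<?s. snd (ys ! j) * c j)" by (rule sum_mono) (use le in auto)
    thus ?thesis by (subst eqs) (simp only: sum_list_nth)
  qed
  assume eq: "sum_list (map snd ys) = sum_list (map snd xs)"
  have cj: "c j = 1" if j: "j < ?s" for j
  proof -
    have "snd (ys ! j) = snd (ys ! j) * c j"
    proof (rule sum_mono_inv[where f="\<lambda>j. snd (ys ! j)" and g="\<lambda>j. snd (ys ! j) * c j" and I="{..<?s}"])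
      show "(\<Sum>j<?s. snd (ys ! j)) = (\<Sum>j<?s. snd (ys ! j) * c j)"
        using eq eqs by (simp only: sum_list_nth)
    qed (use le j in auto)
    thus ?thesis using ypos(2)[OF j] by simp
  qed
  define \<iota> where "\<iota> j = (SOME i. i < ?r \<and> A i j = 1)" for j
  have iota: "\<iota> j < ?r \<and> A (\<iota> j) j = 1 \<and> (\<forall>i. i \<noteq> \<iota> j \<longrightarrow> A i j = 0)" if j: "j < ?s" for j
  proof -
    from c1[OF j] have "(\<Sum>i<?r. A i j) \<noteq> 0" unfolding c_def by linarith
    then obtain i where "i \<in> {..<?r}" "A i j \<noteq> 0" by (meson sum.neutral)
    hence i: "i < ?r" "0 < A i j" by auto
    have others: "A i' j = 0" if "i' \<noteq> i" for i'
    proof (cases "i' < ?r")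
      case True
      have "A i j + A i' j \<le> c j" unfolding c_def
        using sum_mono2[of "{..<?r}" "{i, i'}" "\<lambda>i. A i j"] True i(1) that by simp
      thus ?thesis using cj[OF j] i(2) by simp
    next
      case False thus ?thesis using z by simp
    qed
    have "c j = A i j + (\<Sum>i'\<in>{..<?r}-{i}. A i' j)" unfolding c_def by (rule sum.remove) (use i in auto)
    moreover have "(\<Sum>i'\<in>{..<?r}-{i}. A i' j) = 0" by (rule sum.neutral) (use others in auto)
    ultimately have "c j = A i j" by simp
    hence Ai: "A i j = 1" using cj[OF j] by simp
    have "\<iota> j = i" unfolding \<iota>_def
      by (rule some_equality) (use i(1) Ai others in \<open>auto, metis One_nat_def zero_neq_one\<close>)
    thus ?thesis using i(1) Ai others by auto
  qed
  have surj: "{..<?r} \<subseteq> \<iota> ` {..<?s}"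
  proof
    fix i assume i: "i \<in> {..<?r}"
    have "0 < (\<Sum>j<?s. A i j * snd (ys ! j))" using row[of i] xpos[of i] i by simp
    hence "(\<Sum>j<?s. A i j * snd (ys ! j)) \<noteq> 0" by linarith
    then obtain j where "j \<in> {..<?s}" "A i j * snd (ys ! j) \<noteq> 0" by (meson sum.neutral)
    hence j: "j < ?s" "A i j \<noteq> 0" by auto
    have "\<iota> j = i"
    proof (rule ccontr)
      assume "\<iota> j \<noteq> i" hence "A i j = 0" using iota[OF j(1)] by auto
      with j(2) show False by simp
    qed
    thus "i \<in> \<iota> ` {..<?s}" using j by auto
  qed
  have im: "\<iota> ` {..<?s} = {..<?r}" using surj iota by auto
  show "?r \<le> ?s" using card_image_le[of "{..<?s}" \<iota>] im by simp
  assume rs: "?r = ?s"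
  have "inj_on \<iota> {..<?s}" by (rule eq_card_imp_inj_on) (use im rs in auto)
  hence bij: "bij_betw \<iota> {..<?s} {..<?r}" using im by (simp add: bij_betw_def)
  have "\<forall>j<?s. ys ! j = xs ! \<iota> j"
  proof (intro allI impI)
    fix j assume j: "j < ?s"
    have f: "fst (ys ! j) = fst (xs ! \<iota> j)"
    proof -
      have "(\<Sum>i<?r. A i j * fst (xs ! i)) = A (\<iota> j) j * fst (xs ! \<iota> j)"
        by (rule sum.remove[of _ "\<iota> j", THEN trans]) (use iota[OF j] in \<open>auto intro!: sum.neutral\<close>)
      thus ?thesis using col[OF j] iota[OF j] by simp
    qed
    have s: "snd (ys ! j) = snd (xs ! \<iota> j)"
    proof -
      have "(\<Sum>j'<?s. A (\<iota> j) j' * snd (ys ! j')) = A (\<iota> j) j * snd (ys ! j)"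
      proof (rule sum.remove[of _ j, THEN trans])
        show "A (\<iota> j) j * snd (ys ! j) + (\<Sum>j'\<in>{..<?s} - {j}. A (\<iota> j) j' * snd (ys ! j')) = A (\<iota> j) j * snd (ys ! j)"
        proof -
          have "A (\<iota> j) j' = 0" if j': "j' \<in> {..<?s} - {j}" for j'
          proof -
            have "\<iota> j \<noteq> \<iota> j'" using inj_onD[OF \<open>inj_on \<iota> {..<?s}\<close>, of j j'] j j' by auto
            thus ?thesis using iota[of j'] j' by auto
          qed
          thus ?thesis by simp
        qed
      qed (use j in auto)
      thus ?thesis using row[of "\<iota> j"] iota[OF j] by simp
    qed
    show "ys ! j = xs ! \<iota> j" using f s by (simp add: prod_eq_iff)
  qed
  from mset_by_bij[OF bij this] show "mset xs = mset ys" by simp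
qed

lemma arr_finite:
  assumes py: "pos_list ys"
  shows "finite (arrangements_list xs ys)"
proof -
  let ?r = "length xs" and ?s = "length ys" and ?M = "sum_list (map snd xs)"
  let ?g = "\<lambda>f :: nat \<times> nat \<Rightarrow> nat. \<lambda>i j. if i < ?r \<and> j < ?s then f (i, j) else 0"
  have "arrangements_list xs ys \<subseteq> ?g ` (({..<?r} \<times> {..<?s}) \<rightarrow>\<^sub>E {..?M})"
  proof
    fix A assume A: "A \<in> arrangements_list xs ys"
    have z: "\<And>i j. ?r \<le> i \<or> ?s \<le> j \<Longrightarrow> A i j = 0"
      and row: "\<And>i. i < ?r \<Longrightarrow> (\<Sum>j<?s. A i j * snd (ys ! j)) = snd (xs ! i)"
      using A unfolding arrangements_list_def by auto
    have bd: "A i j \<le> ?M" if "i < ?r" "j < ?s" for i j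
    proof -
      have "0 < snd (ys ! j)" using py nth_mem[OF that(2)] unfolding pos_list_def by blast
      hence "A i j \<le> A i j * snd (ys ! j)" by simp
      also have "\<dots> \<le> (\<Sum>j<?s. A i j * snd (ys ! j))" by (rule member_le_sum) (use that in auto)
      also have "\<dots> = snd (xs ! i)" using row that by simp
      also have "\<dots> \<le> ?M" unfolding sum_list_nth by (rule member_le_sum) (use that in auto)
      finally show ?thesis .
    qed
    let ?f = "restrict (\<lambda>(i, j). A i j) ({..<?r} \<times> {..<?s})"
    have "A = ?g ?f" using z by (intro ext) auto
    moreover have "?f \<in> ({..<?r} \<times> {..<?s}) \<rightarrow>\<^sub>E {..?M}" using bd by auto
    ultimately show "A \<in> ?g ` (({..<?r} \<times> {..<?s}) \<rightarrow>\<^sub>E {..?M})" by blast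
  qed
  thus ?thesis by (rule finite_subset) (intro finite_imageI finite_PiE, auto)
qed

lemma arr_diag:
  assumes px: "pos_list xs" and py: "pos_list ys" and m: "mset xs = mset ys"
  shows "card (arrangements_list xs ys) \<noteq> 0"
proof -
  obtain f where f: "bij_betw f {..<length xs} {..<length ys}" "\<forall>i<length xs. xs ! i = ys ! f i"
    using permutation_Ex_bij[OF m] by auto
  have len: "length xs = length ys" using m by (metis size_mset)
  let ?r = "length xs"
  define A where "A i j = (if i < ?r \<and> j < ?r \<and> j = f i then 1 else (0::nat))" for i j
  have fi: "f i < ?r" if "i < ?r" for i using f(1) that len by (auto simp: bij_betw_def)
  have "A \<in> arrangements_list xs ys" unfolding arrangements_list_def
  proof (intro CollectI conjI allI impI)
    fix i j assume "length xs \<le> i \<or> length ys \<le> j" thus "A i j = 0" using len by (auto simp: A_def)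
  next
    fix i assume i: "i < length xs"
    have "(\<Sum>j<length ys. A i j * snd (ys ! j)) = (\<Sum>j<length ys. if j = f i then snd (ys ! j) else 0)"
      using i len by (intro sum.cong) (auto simp: A_def)
    also have "\<dots> = snd (ys ! f i)" using fi[OF i] len by simp
    finally show "(\<Sum>j<length ys. A i j * snd (ys ! j)) = snd (xs ! i)" using f(2) i by simp
  next
    fix j assume j: "j < length ys"
    then obtain i where i: "i < ?r" "f i = j" using f(1) by (metis bij_betw_def imageE lessThan_iff)
    have "(\<Sum>i'<?r. A i' j * fst (xs ! i')) = (\<Sum>i'<?r. if i' = i then fst (xs ! i') else 0)"
      using i j len f(1) by (intro sum.cong) (auto simp: A_def bij_betw_def inj_on_def)
    also have "\<dots> = fst (xs ! i)" using i by simp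
    finally show "(\<Sum>i'<length xs. A i' j * fst (xs ! i')) = fst (ys ! j)" using f(2) i by simp
  qed
  thus ?thesis using arr_finite[OF py] by (auto simp: card_eq_0_iff)
qed




definition lx :: "mtype \<Rightarrow> (nat \<times> nat) list" where "lx l = (SOME xs. mset xs = l)"

lemma mset_lx: "mset (lx l) = l"
  unfolding lx_def by (rule someI_ex) (rule ex_mset)

lemma arr_lx: "arr l u = card (arrangements_list (lx l) (lx u))"
  unfolding arr_def lx_def ..

lemma pos_lx: "is_type l \<Longrightarrow> pos_list (lx l)"
proof -
  assume "is_type l"
  moreover have "set (lx l) = set_mset l" by (metis mset_lx set_mset_mset)
  ultimately show ?thesis unfolding pos_list_def is_type_def by auto
qed

definition sm :: "mtype \<Rightarrow> nat" where "sm l = sum_mset (image_mset snd l)"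

lemma sm_lx: "sm l = sum_list (map snd (lx l))"
proof -
  have "sm (mset xs) = sum_list (map snd xs)" for xs
    unfolding sm_def by (simp add: sum_mset_sum_list flip: mset_map)
  from this[of "lx l"] show ?thesis by (simp add: mset_lx)
qed

definition \<mu> :: "nat \<Rightarrow> mtype \<Rightarrow> nat" where "\<mu> d l = (d + 1) * sm l + (d - size l)"

lemma tri:
  assumes l: "l \<in> types_of_deg d" and u: "u \<in> types_of_deg d" and a: "arr l u \<noteq> 0" and ne: "l \<noteq> u"
  shows "\<mu> d u < \<mu> d l"
proof -
  have tl: "is_type l" "tdeg l = d" and tu: "is_type u" "tdeg u = d" using l u by (auto simp: types_of_deg_def)
  from a obtain A where A: "A \<in> arrangements_list (lx l) (lx u)" unfolding arr_lx by (metis card.empty ex_in_conv)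
  note m = arr_main[OF A pos_lx[OF tl(1)] pos_lx[OF tu(1)], folded sm_lx]
  have szl: "size l \<le> d" and szu: "size u \<le> d" using tdeg_ge[OF tl(1)] tdeg_ge[OF tu(1)] tl(2) tu(2) by auto
  have len: "length (lx l) = size l" "length (lx u) = size u" by (metis mset_lx size_mset)+
  show ?thesis
  proof (cases "sm u = sm l")
    case True
    have "size l \<le> size u" using m(2)[OF True] len by simp
    moreover have "size l \<noteq> size u" using m(3)[OF True] len ne by (auto simp: mset_lx)
    ultimately show ?thesis using True szu unfolding \<mu>_def by simp
  next
    case False
    hence "sm u + 1 \<le> sm l" using m(1) by simp
    hence "(d + 1) * (sm u + 1) \<le> (d + 1) * sm l" by (rule mult_le_mono2)
    thus ?thesis unfolding \<mu>_def by (simp add: algebra_simps)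
  qed
qed

lemma diag: "l \<in> types_of_deg d \<Longrightarrow> arr l l \<noteq> 0"
  unfolding arr_lx by (rule arr_diag) (auto simp: pos_lx types_of_deg_def)

lemma mat_mult_entry: "A \<in> carrier_mat n n \<Longrightarrow> B \<in> carrier_mat n n \<Longrightarrow> i < n \<Longrightarrow> j < n \<Longrightarrow>
  (A * B) $$ (i, j) = (\<Sum>k<n. A $$ (i, k) * B $$ (k, j))"
  by (simp add: scalar_prod_def atLeast0LessThan)

lemma sum_ts: "distinct ts \<Longrightarrow> (\<Sum>u\<in>set ts. h u) = (\<Sum>k<length ts. h (ts ! k))"
proof -
  assume d: "distinct ts"
  have "set ts = (!) ts ` {..<length ts}" by (auto simp: in_set_conv_nth)
  moreover have "inj_on ((!) ts) {..<length ts}" using d by (simp add: inj_on_def nth_eq_iff_index_eq)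
  ultimately show ?thesis by (simp add: sum.reindex)
qed

lemma inverse_exists: "\<exists>g. is_arr_inverse d g"
proof -
  let ?T = "types_of_deg d"
  obtain ts where ts: "set ts = ?T" "distinct ts" using finite_distinct_list[OF finite_types] by blast
  define N where "N = length ts"
  define M :: "rat mat" where "M = mat N N (\<lambda>(i, j). of_nat (arr (ts ! i) (ts ! j)))"
  have Mc: "M \<in> carrier_mat N N" by (simp add: M_def)
  have tsT: "ts ! k \<in> ?T" if "k < N" for k using nth_mem[of k ts] that ts(1) N_def by simp
  have entryM: "M $$ (i, j) = of_nat (arr (ts ! i) (ts ! j))" if "i < N" "j < N" for i j
    using that by (simp add: M_def)
  have det: "det M \<noteq> 0"
  proof
    assume "det M = 0"
    then obtain v where v: "v \<in> carrier_vec N" "v \<noteq> 0\<^sub>v N" "M *\<^sub>v v = 0\<^sub>v N"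
      using det_0_iff_vec_prod_zero_field[OF Mc] by blast
    have dv: "dim_vec v = N" using v(1) by simp
    have "\<exists>k. k < N \<and> v $ k \<noteq> 0"
    proof (rule ccontr)
      assume "\<not> ?thesis" hence z: "\<And>k. k < N \<Longrightarrow> v $ k = 0" by blast
      have "v = 0\<^sub>v N" by (rule eq_vecI) (simp_all add: z dv)
      with v(2) show False by simp
    qed
    then obtain k0 where k0: "k0 < N \<and> v $ k0 \<noteq> 0" and
      mink: "\<And>k. k < N \<and> v $ k \<noteq> 0 \<Longrightarrow> \<mu> d (ts ! k0) \<le> \<mu> d (ts ! k)"
      using ex_has_least_nat[of "\<lambda>k. k < N \<and> v $ k \<noteq> 0" _ "\<lambda>k. \<mu> d (ts ! k)"] by blast
    have "(M *\<^sub>v v) $ k0 = row M k0 \<bullet> v" using k0 Mc by simp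
    also have "\<dots> = (\<Sum>k<N. M $$ (k0, k) * v $ k)"
      unfolding scalar_prod_def dv using k0 Mc by (simp add: atLeast0LessThan)
    also have "\<dots> = M $$ (k0, k0) * v $ k0 + (\<Sum>k\<in>{..<N} - {k0}. M $$ (k0, k) * v $ k)"
      by (rule sum.remove) (use k0 in auto)
    also have "(\<Sum>k\<in>{..<N} - {k0}. M $$ (k0, k) * v $ k) = 0"
    proof (rule sum.neutral, rule ballI)
      fix k assume k: "k \<in> {..<N} - {k0}"
      hence kN: "k < N" and kk: "k \<noteq> k0" by auto
      show "M $$ (k0, k) * v $ k = 0"
      proof (cases "v $ k = 0")
        case False
        have ne: "ts ! k0 \<noteq> ts ! k" using nth_eq_iff_index_eq[OF ts(2), of k0 k] kN k0 kk N_def by simp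
        have "arr (ts ! k0) (ts ! k) = 0"
        proof (rule ccontr)
          assume "arr (ts ! k0) (ts ! k) \<noteq> 0"
          from tri[OF tsT[of k0] tsT[OF kN] this ne] k0
          have "\<mu> d (ts ! k) < \<mu> d (ts ! k0)" by blast
          moreover have "\<mu> d (ts ! k0) \<le> \<mu> d (ts ! k)" using mink[of k] kN False by blast
          ultimately show False by linarith
        qed
        thus ?thesis using entryM[of k0 k] kN k0 by simp
      qed simp
    qed
    finally have "(M *\<^sub>v v) $ k0 = M $$ (k0, k0) * v $ k0" by simp
    moreover have "M $$ (k0, k0) \<noteq> 0" using k0 diag[OF tsT[of k0]] entryM[of k0 k0] by simp
    ultimately have "(M *\<^sub>v v) $ k0 \<noteq> 0" using k0 by simp
    with v(3) k0 show False by simp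
  qed
  have U: "M \<in> Units (ring_mat TYPE(rat) N ())" by (rule det_non_zero_imp_unit[OF Mc det])
  obtain B where Bc: "B \<in> carrier_mat N N" and BM: "B * M = 1\<^sub>m N" and MB: "M * B = 1\<^sub>m N"
    using U unfolding Units_def ring_mat_simps by blast
  define idx where "idx u = the_inv_into {..<N} ((!) ts) u" for u
  have inj: "inj_on ((!) ts) {..<N}" using ts(2) N_def by (simp add: inj_on_def nth_eq_iff_index_eq)
  have setts: "(!) ts ` {..<N} = set ts" unfolding N_def by (auto simp: in_set_conv_nth)
  have im: "(!) ts ` {..<N} = ?T" using setts ts(1) by simp
  have idx1: "idx u < N \<and> ts ! idx u = u" if "u \<in> ?T" for u
  proof -
    have "u \<in> (!) ts ` {..<N}" using that im by simp
    thus ?thesis using the_inv_into_into[OF inj, of u "{..<N}"] f_the_inv_into_f[OF inj, of u]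
      unfolding idx_def by simp
  qed
  have idx2: "idx (ts ! k) = k" if "k < N" for k
    using the_inv_into_f_f[OF inj] that unfolding idx_def by simp
  have idxeq: "idx l = idx t \<longleftrightarrow> l = t" if "l \<in> ?T" "t \<in> ?T" for l t
    using idx1[OF that(1)] idx1[OF that(2)] by metis
  define g where "g l t = (if l \<in> ?T \<and> t \<in> ?T then B $$ (idx l, idx t) else 0)" for l t
  have sumT: "(\<Sum>u\<in>?T. h u) = (\<Sum>k<N. h (ts ! k))" for h :: "mtype \<Rightarrow> rat"
    using sum_ts[OF ts(2), of h] ts(1) N_def by simp
  have gk: "g (ts ! k) t = B $$ (k, idx t)" if "k < N" "t \<in> ?T" for k t
    using that tsT[OF that(1)] idx2[OF that(1)] by (simp add: g_def)
  have gk2: "g l (ts ! k) = B $$ (idx l, k)" if "k < N" "l \<in> ?T" for k l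
    using that tsT[OF that(1)] idx2[OF that(1)] by (simp add: g_def)
  have "is_arr_inverse d g"
    unfolding is_arr_inverse_def
  proof (intro conjI ballI allI impI)
    fix l t assume l: "l \<in> ?T" and t: "t \<in> ?T"
    have "(\<Sum>u\<in>?T. of_nat (arr l u) * g u t) = (\<Sum>k<N. M $$ (idx l, k) * B $$ (k, idx t))"
      unfolding sumT
    proof (rule sum.cong)
      fix k assume "k \<in> {..<N}" hence k: "k < N" by simp
      show "of_nat (arr l (ts ! k)) * g (ts ! k) t = M $$ (idx l, k) * B $$ (k, idx t)"
        using entryM[of "idx l" k] k idx1[OF l] gk[OF k t] by simp
    qed simp
    also have "\<dots> = (M * B) $$ (idx l, idx t)" using mat_mult_entry[OF Mc Bc] idx1 l t by simp
    also have "\<dots> = (if l = t then 1 else 0)" unfolding MB using idx1[OF l] idx1[OF t] idxeq[OF l t] by simp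
    finally show "(\<Sum>u\<in>?T. of_nat (arr l u) * g u t) = (if l = t then 1 else 0)" .
    have "(\<Sum>u\<in>?T. g l u * of_nat (arr u t)) = (\<Sum>k<N. B $$ (idx l, k) * M $$ (k, idx t))"
      unfolding sumT
    proof (rule sum.cong)
      fix k assume "k \<in> {..<N}" hence k: "k < N" by simp
      show "g l (ts ! k) * of_nat (arr (ts ! k) t) = B $$ (idx l, k) * M $$ (k, idx t)"
        using entryM[of k "idx t"] k idx1[OF t] gk2[OF k l] by simp
    qed simp
    also have "\<dots> = (B * M) $$ (idx l, idx t)" using mat_mult_entry[OF Bc Mc] idx1 l t by simp
    also have "\<dots> = (if l = t then 1 else 0)" unfolding BM using idx1[OF l] idx1[OF t] idxeq[OF l t] by simp
    finally show "(\<Sum>u\<in>?T. g l u * of_nat (arr u t)) = (if l = t then 1 else 0)" .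
  next
    fix l t assume "l \<notin> ?T \<or> t \<notin> ?T" thus "g l t = 0" by (auto simp: g_def)
  qed
  thus ?thesis by blast
qed

lemma inverse_unique: assumes g: "is_arr_inverse d g" and h: "is_arr_inverse d h" shows "g = h"
proof (intro ext)
  fix l t
  let ?T = "types_of_deg d"
  show "g l t = h l t"
  proof (cases "l \<in> ?T \<and> t \<in> ?T")
    case False thus ?thesis using g h unfolding is_arr_inverse_def by auto
  next
    case True
    have fT: "finite ?T" by (rule finite_types)
    have "(\<Sum>u\<in>?T. g l u * (if u = t then 1 else 0)) = (\<Sum>u\<in>?T. if u = t then g l u else 0)"
      by (intro sum.cong) auto
    also have "\<dots> = g l t" using True fT by simp
    finally have "g l t = (\<Sum>u\<in>?T. g l u * (if u = t then 1 else 0))" by simp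
    also have "\<dots> = (\<Sum>u\<in>?T. g l u * (\<Sum>v\<in>?T. of_nat (arr u v) * h v t))"
      using h True unfolding is_arr_inverse_def by (intro sum.cong) auto
    also have "\<dots> = (\<Sum>v\<in>?T. (\<Sum>u\<in>?T. g l u * of_nat (arr u v)) * h v t)"
      by (simp add: sum_distrib_left sum_distrib_right mult.assoc) (rule sum.swap)
    also have "\<dots> = (\<Sum>v\<in>?T. (if l = v then 1 else 0) * h v t)"
      using g True unfolding is_arr_inverse_def by (intro sum.cong) auto
    also have "\<dots> = (\<Sum>v\<in>?T. if v = l then h v t else 0)" by (intro sum.cong) auto
    also have "\<dots> = h l t" using True fT by simp
    finally show ?thesis .
  qed
qed

lemma arr_inv_eq: "is_arr_inverse (tdeg t) g \<Longrightarrow> arr_inv l t = g l t"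
proof -
  assume g: "is_arr_inverse (tdeg t) g"
  have "(THE g. is_arr_inverse (tdeg t) g) = g" by (rule the_equality) (use g inverse_unique in auto)
  thus ?thesis unfolding arr_inv_def by simp
qed

lemma arr_inv_is: "is_arr_inverse d (\<lambda>l t. if tdeg t = d then arr_inv l t else 0)"
proof -
  obtain g where g: "is_arr_inverse d g" using inverse_exists by blast
  have "(\<lambda>l t. if tdeg t = d then arr_inv l t else 0) = g"
  proof (intro ext)
    fix l t show "(if tdeg t = d then arr_inv l t else 0) = g l t"
      using arr_inv_eq[of t g] g unfolding is_arr_inverse_def types_of_deg_def by auto
  qed
  thus ?thesis using g by simp
qed




lemma lookup_smul: "Poly_Mapping.lookup (Poly_Mapping.single 0 s * p) k = s * Poly_Mapping.lookup p k"
  by (simp add: mult_map_scale_conv_mult[symmetric] map.rep_eq when_def)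

definition eps :: "(mon \<Rightarrow>\<^sub>0 rat) \<Rightarrow> rat" where
  "eps f = (\<Sum>b\<in>Poly_Mapping.keys f. Poly_Mapping.lookup f b)"

lemma eps_F: "finite F \<Longrightarrow> Poly_Mapping.keys f \<subseteq> F \<Longrightarrow> eps f = (\<Sum>b\<in>F. Poly_Mapping.lookup f b)"
  unfolding eps_def by (rule sum.mono_neutral_left) (auto simp: in_keys_iff)

lemma eps_add: "eps (f + g) = eps f + eps g"
proof -
  let ?F = "Poly_Mapping.keys f \<union> Poly_Mapping.keys g"
  have "eps (f + g) = (\<Sum>b\<in>?F. Poly_Mapping.lookup (f + g) b)"
    by (rule eps_F) (auto simp: in_keys_iff lookup_add)
  also have "\<dots> = (\<Sum>b\<in>?F. Poly_Mapping.lookup f b) + (\<Sum>b\<in>?F. Poly_Mapping.lookup g b)"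
    by (simp add: lookup_add sum.distrib)
  also have "\<dots> = eps f + eps g" by (simp add: eps_F[symmetric])
  finally show ?thesis .
qed

lemma eps_zero: "eps 0 = 0" by (simp add: eps_def)

lemma eps_sum: "eps (sum f I) = (\<Sum>i\<in>I. eps (f i))"
  by (induct I rule: infinite_finite_induct) (auto simp: eps_zero eps_add)

lemma eps_smul: "eps (Poly_Mapping.single 0 s * f) = s * eps f"
proof -
  have "eps (Poly_Mapping.single 0 s * f) = (\<Sum>b\<in>Poly_Mapping.keys f. Poly_Mapping.lookup (Poly_Mapping.single 0 s * f) b)"
    by (rule eps_F) (auto simp: in_keys_iff lookup_smul)
  thus ?thesis by (simp add: lookup_smul eps_def sum_distrib_left)
qed

lemma eps_mono: "eps (mono b) = 1"
  by (simp add: eps_def mono_def)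

lemma single0_sum: "(\<Sum>i\<in>I. Poly_Mapping.single 0 (c i)) = Poly_Mapping.single 0 (sum c I)"
  by (induct I rule: infinite_finite_induct) (auto simp: single_add)

lemma pm_list: "prod_mset (image_mset f (mset ys)) = prod_list (map f ys)"
  by (induct ys) auto

context degm begin

lemma S_expand: "is_type \<tau> \<Longrightarrow>
  (S deg \<tau> :: _ \<Rightarrow>\<^sub>0 'r::comm_ring_1) = (\<Sum>bs\<in>Tset deg (lx \<tau>). mono (sig (lx \<tau>) bs))"
proof -
  have "(S deg \<tau> :: _ \<Rightarrow>\<^sub>0 'r) = (\<Prod>(k, m)\<in>#\<tau>. psi m (E deg k))" by (simp add: S_def E_def)
  also have "\<dots> = prod_list (map (\<lambda>(k, m). psi m (E deg k :: _ \<Rightarrow>\<^sub>0 'r)) (lx \<tau>))"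
    using pm_list[of "\<lambda>(k, m). psi m (E deg k :: _ \<Rightarrow>\<^sub>0 'r)" "lx \<tau>"] by (simp only: mset_lx)
  also have "\<dots> = (\<Sum>bs\<in>Tset deg (lx \<tau>). mono (sig (lx \<tau>) bs))" by (rule expand)
  finally show ?thesis .
qed

lemma part1:
  assumes ty: "is_type \<tau>"
  shows "(S deg \<tau> :: _ \<Rightarrow>\<^sub>0 'r::comm_ring_1)
      = (\<Sum>lam\<in>types_of_deg (tdeg \<tau>). of_nat (arr lam \<tau>) * X deg lam)"
proof -
  let ?d = "tdeg \<tau>" and ?ys = "lx \<tau>"
  let ?D = "{x. deg x = ?d}" and ?T = "types_of_deg ?d"
  let ?TS = "Tset deg ?ys"
  have fD: "finite ?D" by (rule fin_all)
  have pos: "\<forall>p\<in>set ?ys. 0 < snd p" using pos_lx[OF ty] unfolding pos_list_def by blast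
  have sigD: "sig ?ys ` ?TS \<subseteq> ?D" using deg_sig by (auto simp: mset_lx)
  have "(S deg \<tau> :: _ \<Rightarrow>\<^sub>0 'r) = (\<Sum>bs\<in>?TS. mono (sig ?ys bs))" by (rule S_expand[OF ty])
  also have "\<dots> = (\<Sum>x\<in>?D. \<Sum>bs\<in>{bs \<in> ?TS. sig ?ys bs = x}. mono (sig ?ys bs))"
    by (rule sum.group[symmetric]) (use finite_Tset fD sigD in auto)
  also have "\<dots> = (\<Sum>x\<in>?D. of_nat (card {bs \<in> ?TS. sig ?ys bs = x}) * mono x)"
  proof (intro sum.cong refl)
    fix x
    have "(\<Sum>bs\<in>{bs \<in> ?TS. sig ?ys bs = x}. (mono (sig ?ys bs) :: _ \<Rightarrow>\<^sub>0 'r)) = (\<Sum>bs\<in>{bs \<in> ?TS. sig ?ys bs = x}. mono x)"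
      by (rule sum.cong) auto
    thus "(\<Sum>bs\<in>{bs \<in> ?TS. sig ?ys bs = x}. (mono (sig ?ys bs) :: _ \<Rightarrow>\<^sub>0 'r)) = of_nat (card {bs \<in> ?TS. sig ?ys bs = x}) * mono x"
      by (simp add: sum_constant)
  qed
  also have "\<dots> = (\<Sum>x\<in>?D. of_nat (arr (type_of deg x) \<tau>) * mono x)"
  proof (intro sum.cong refl)
    fix x
    have "card {bs \<in> ?TS. sig ?ys bs = x} = card (arrangements_list (lx (type_of deg x)) ?ys)"
      by (rule card_fiber[OF pos mset_lx])
    thus "of_nat (card {bs \<in> ?TS. sig ?ys bs = x}) * (mono x :: _ \<Rightarrow>\<^sub>0 'r) = of_nat (arr (type_of deg x) \<tau>) * mono x"
      by (simp add: arr_lx)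
  qed
  also have "\<dots> = (\<Sum>lam\<in>?T. \<Sum>x\<in>{x \<in> ?D. type_of deg x = lam}. of_nat (arr (type_of deg x) \<tau>) * mono x)"
    by (rule sum.group[symmetric]) (use fD finite_types in \<open>auto simp: types_of_deg_def is_type_type tdeg_type\<close>)
  also have "\<dots> = (\<Sum>lam\<in>?T. of_nat (arr lam \<tau>) * X deg lam)"
  proof (intro sum.cong refl)
    fix lam assume lam: "lam \<in> ?T"
    have "{x \<in> ?D. type_of deg x = lam} = {x. type_of deg x = lam}"
      using lam tdeg_type by (auto simp: types_of_deg_def)
    thus "(\<Sum>x\<in>{x \<in> ?D. type_of deg x = lam}. of_nat (arr (type_of deg x) \<tau>) * mono x) = of_nat (arr lam \<tau>) * (X deg lam :: _ \<Rightarrow>\<^sub>0 'r)"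
      by (simp add: X_def sum_distrib_left)
  qed
  finally show ?thesis .
qed


lemma smul_ofnat: "Poly_Mapping.single 0 a * (of_nat n * f) = Poly_Mapping.single 0 (of_nat n * a) * (f :: mon \<Rightarrow>\<^sub>0 rat)"
proof -
  have e: "(of_nat n :: mon \<Rightarrow>\<^sub>0 rat) = Poly_Mapping.single 0 (of_nat n)" by simp
  have "Poly_Mapping.single 0 a * (of_nat n * f) = (Poly_Mapping.single 0 a * Poly_Mapping.single 0 (of_nat n)) * f"
    unfolding e by (simp only: mult.assoc)
  also have "Poly_Mapping.single 0 a * Poly_Mapping.single 0 (of_nat n) = Poly_Mapping.single 0 (of_nat n * a)"
    by (subst mult_single) (simp add: mult.commute)
  finally show ?thesis .
qed

lemma part2:
  assumes ty: "is_type \<tau>"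
  shows "(X deg \<tau> :: _ \<Rightarrow>\<^sub>0 rat)
      = (\<Sum>lam\<in>types_of_deg (tdeg \<tau>). Poly_Mapping.single {#} (arr_inv lam \<tau>) * S deg lam)"
proof -
  let ?d = "tdeg \<tau>"
  let ?T = "types_of_deg ?d"
  have tT: "\<tau> \<in> ?T" using ty by (simp add: types_of_deg_def)
  have inv: "\<And>l t. l \<in> ?T \<Longrightarrow> t \<in> ?T \<Longrightarrow>
      (\<Sum>u\<in>?T. of_nat (arr l u) * (if tdeg t = ?d then arr_inv u t else 0)) = (if l = t then 1 else 0)"
    using arr_inv_is[of ?d] unfolding is_arr_inverse_def by blast
  have inv\<tau>: "(\<Sum>u\<in>?T. of_nat (arr l u) * arr_inv u \<tau>) = (if l = \<tau> then 1 else 0)" if "l \<in> ?T" for l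
    using inv[OF that tT] by simp
  have "(\<Sum>lam\<in>?T. Poly_Mapping.single {#} (arr_inv lam \<tau>) * S deg lam)
      = (\<Sum>lam\<in>?T. Poly_Mapping.single 0 (arr_inv lam \<tau>) * (\<Sum>mu\<in>?T. of_nat (arr mu lam) * X deg mu))"
  proof (intro sum.cong refl)
    fix lam assume lam: "lam \<in> ?T"
    hence "is_type lam" "tdeg lam = ?d" by (auto simp: types_of_deg_def)
    thus "Poly_Mapping.single {#} (arr_inv lam \<tau>) * S deg lam = Poly_Mapping.single 0 (arr_inv lam \<tau>) * (\<Sum>mu\<in>?T. of_nat (arr mu lam) * (X deg mu :: _ \<Rightarrow>\<^sub>0 rat))"
      using part1[OF \<open>is_type lam\<close>, where 'r=rat] \<open>tdeg lam = ?d\<close> by simp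
  qed
  also have "\<dots> = (\<Sum>lam\<in>?T. \<Sum>mu\<in>?T. Poly_Mapping.single 0 (of_nat (arr mu lam) * arr_inv lam \<tau>) * X deg mu)"
    by (simp add: sum_distrib_left smul_ofnat)
  also have "\<dots> = (\<Sum>mu\<in>?T. \<Sum>lam\<in>?T. Poly_Mapping.single 0 (of_nat (arr mu lam) * arr_inv lam \<tau>) * X deg mu)"
    by (rule sum.swap)
  also have "\<dots> = (\<Sum>mu\<in>?T. Poly_Mapping.single 0 (\<Sum>lam\<in>?T. of_nat (arr mu lam) * arr_inv lam \<tau>) * X deg mu)"
    by (intro sum.cong refl) (simp only: sum_distrib_right[symmetric] single0_sum)
  also have "\<dots> = (\<Sum>mu\<in>?T. if mu = \<tau> then X deg mu else 0)"
    by (intro sum.cong refl) (simp add: inv\<tau>)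
  also have "\<dots> = X deg \<tau>" using tT finite_types by simp
  finally show ?thesis by simp
qed

lemma card_Tset: "(of_nat (card (Tset deg ys)) :: rat) = (\<Prod>(k, m)\<leftarrow>ys. of_nat (card {b. deg b = k}))"
proof (induct ys)
  case Nil thus ?case by (simp add: Tset_Nil)
next
  case (Cons p ys)
  have inj: "inj_on (\<lambda>(b, bs). b # bs) ({b. deg b = fst p} \<times> Tset deg ys)" by (auto simp: inj_on_def)
  have "card (Tset deg (p # ys)) = card {b. deg b = fst p} * card (Tset deg ys)"
    unfolding Tset_Cons card_image[OF inj] by (simp add: card_cartesian_product)
  thus ?case using Cons by (cases p) simp
qed

lemma eps_S: "is_type l \<Longrightarrow> eps (S deg l) = (\<Prod>(k, m)\<in>#l. of_nat (card {b. deg b = k}))"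
proof -
  assume ty: "is_type l"
  have "eps (S deg l) = (\<Sum>bs\<in>Tset deg (lx l). eps (mono (sig (lx l) bs)))"
    by (simp add: S_expand[OF ty] eps_sum)
  also have "\<dots> = of_nat (card (Tset deg (lx l)))" by (simp add: eps_mono)
  also have "\<dots> = (\<Prod>(k, m)\<leftarrow>lx l. of_nat (card {b. deg b = k}))" by (rule card_Tset)
  also have "\<dots> = (\<Prod>(k, m)\<in>#l. of_nat (card {b. deg b = k}))"
    using pm_list[of "\<lambda>(k, m). of_nat (card {b. deg b = k}) :: rat" "lx l"] by (simp only: mset_lx)
  finally show ?thesis .
qed

lemma part3:
  assumes ty: "is_type \<tau>"
  shows "(of_nat (card {b. type_of deg b = \<tau>}) :: rat)
           = (\<Sum>\<sigma>\<in>types_of_deg (tdeg \<tau>). arr_inv \<sigma> \<tau> *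
                (\<Prod>(k, m)\<in>#\<sigma>. of_nat (card {b. deg b = k})))"
proof -
  let ?T = "types_of_deg (tdeg \<tau>)"
  have fB: "finite {b. type_of deg b = \<tau>}"
    by (rule finite_subset[OF _ fin_all[of "tdeg \<tau>"]]) (auto simp: tdeg_type)
  have "(of_nat (card {b. type_of deg b = \<tau>}) :: rat) = eps (X deg \<tau>)"
    by (simp add: X_def eps_sum eps_mono)
  also have "\<dots> = eps (\<Sum>lam\<in>?T. Poly_Mapping.single {#} (arr_inv lam \<tau>) * S deg lam)"
    using part2[OF ty] by simp
  also have "\<dots> = (\<Sum>lam\<in>?T. arr_inv lam \<tau> * eps (S deg lam))"
    by (simp add: eps_sum eps_smul)
  also have "\<dots> = (\<Sum>\<sigma>\<in>?T. arr_inv \<sigma> \<tau> * (\<Prod>(k, m)\<in>#\<sigma>. of_nat (card {b. deg b = k})))"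
    by (intro sum.cong refl) (simp add: eps_S types_of_deg_def)
  finally show ?thesis .
qed

end

theorem theorem5:
  fixes deg :: "nat multiset \<Rightarrow> nat" and \<tau> :: "(nat \<times> nat) multiset"
  assumes hom0: "deg {#} = 0"
    and hom: "\<And>x y. deg (x + y) = deg x + deg y"
    and deg0: "{b. deg b = 0} = { {#} }"
    and fin: "\<And>d. 0 < d \<Longrightarrow> finite {b. deg b = d}"
    and is_ty: "is_type \<tau>"
  shows "(S deg \<tau> :: nat multiset \<Rightarrow>\<^sub>0 int)
           = (\<Sum>lam\<in>types_of_deg (tdeg \<tau>). of_nat (arr lam \<tau>) * X deg lam)
       \<and> (X deg \<tau> :: nat multiset \<Rightarrow>\<^sub>0 rat)
           = (\<Sum>lam\<in>types_of_deg (tdeg \<tau>). Poly_Mapping.single {#} (arr_inv lam \<tau>) * S deg lam)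
       \<and> (of_nat (card {b. type_of deg b = \<tau>}) :: rat)
           = (\<Sum>\<sigma>\<in>types_of_deg (tdeg \<tau>). arr_inv \<sigma> \<tau> *
                (\<Prod>(k, m)\<in>#\<sigma>. of_nat (card {b. deg b = k})))"
proof -
  interpret degm deg by (unfold_locales) (fact hom0 hom deg0 fin)+
  show ?thesis using part1[OF is_ty] part2[OF is_ty] part3[OF is_ty] by blast
qed


end
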